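(* Let $\mu>0$, $L>0$, let $g:\mathbb{R}^n\to\mathbb{R}$ be $\mu$-strongly convex and $(L+\mu)$-smooth, let $h$ be proper closed convex, $\psi=g+h$, and run the ACG method (see context) from $x_0\in\mathbb{R}^n$. Then for every $j\ge0$: (a) $\gamma_j\le\tilde\gamma_j\le\psi$, $\tilde\gamma_j(\tilde y_{j+1})=\gamma_j(\tilde y_{j+1})$, and $$\min_{u\in\mathbb{R}^n}\left\{\tilde\gamma_j(u)+\tfrac L2\|u-\tilde x_j\|^2\right\}=\min_{u\in\mathbb{R}^n}\left\{\gamma_j(u)+\tfrac L2\|u-\tilde x_j\|^2\right\},$$ with both minimization problems having $\tilde y_{j+1}$ as unique optimal solution; (b) $\gamma_j$ and $\Gamma_{j+1}$ are $\mu$-strongly convex quadratic functions; (c) $x_j=\mathrm{argmin}_{u\in\mathbb{R}^n}\{A_j\Gamma_j(u)+\|u-x_0\|^2/2\}$.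
   Context: $\ell_g(u;x)=g(x)+\langle\nabla g(x),u-x\rangle$. ACG method: $A_0=0$, $\tau_0=1/L$, $y_0=x_0$; for $j\ge0$: $a_j=\frac{\tau_j+\sqrt{\tau_j^2+4\tau_jA_j}}{2}$, $\tau_{j+1}=\tau_j+\mu a_j/L$, $A_{j+1}=A_j+a_j$, $\tilde x_j=\frac{A_j}{A_{j+1}}y_j+\frac{a_j}{A_{j+1}}x_j$; $\tilde y_{j+1}=\mathrm{argmin}_u\{\ell_g(u;\tilde x_j)+h(u)+\frac{L+\mu}{2}\|u-\tilde x_j\|^2\}$; $y_{j+1}\in\mathrm{Argmin}\{\psi(u):u\in\{y_j,\tilde y_{j+1}\}\}$; $x_{j+1}=\frac{(L+\mu)a_j\tilde y_{j+1}-\frac{A_ja_jL}{A_{j+1}}y_j}{A_{j+1}\mu+1}$. Define $\tilde\gamma_j(u)=\ell_g(u;\tilde x_j)+h(u)+\frac\mu2\|u-\tilde x_j\|^2$, $\gamma_j(u)=\tilde\gamma_j(\tilde y_{j+1})+L\langle\tilde x_j-\tilde y_{j+1},u-\tilde y_{j+1}\rangle+\frac\mu2\|u-\tilde y_{j+1}\|^2$, $\Gamma_0\equiv0$, $\Gamma_{j+1}=(A_j\Gamma_j+a_j\gamma_j)/A_{j+1}$. *)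

theory Defs
  imports "HOL-Analysis.Analysis"
begin

definition strongly_convex :: "real \<Rightarrow> ('a::real_inner \<Rightarrow> real) \<Rightarrow> bool" where
  "strongly_convex \<mu> f \<longleftrightarrow>
     (\<forall>x y t. 0 \<le> t \<and> t \<le> 1 \<longrightarrow>
        f (t *\<^sub>R x + (1 - t) *\<^sub>R y)
          \<le> t * f x + (1 - t) * f y - t * (1 - t) * (\<mu> / 2) * (norm (x - y))\<^sup>2)"

definition smooth_with_gradient :: "real \<Rightarrow> ('a::real_inner \<Rightarrow> real) \<Rightarrow> ('a \<Rightarrow> 'a) \<Rightarrow> bool" where
  "smooth_with_gradient M f f' \<longleftrightarrow>
     (\<forall>x. GDERIV f x :> f' x) \<and> (\<forall>x y. norm (f' x - f' y) \<le> M * norm (x - y))"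

definition proper_closed_convex :: "('a::real_normed_vector \<Rightarrow> ereal) \<Rightarrow> bool" where
  "proper_closed_convex h \<longleftrightarrow>
     (\<forall>x. h x \<noteq> -\<infinity>) \<and> (\<exists>x. h x \<noteq> \<infinity>) \<and>
     (\<forall>x y t. 0 < t \<and> t < 1 \<longrightarrow>
        h (t *\<^sub>R x + (1 - t) *\<^sub>R y) \<le> ereal t * h x + ereal (1 - t) * h y) \<and>
     closed {(x, r::real). h x \<le> ereal r}"

definition quadratic_fun :: "('a::real_inner \<Rightarrow> real) \<Rightarrow> bool" where
  "quadratic_fun f \<longleftrightarrow>
     (\<exists>Q b c. linear Q \<and> (\<forall>x y. inner (Q x) y = inner x (Q y)) \<and>
        (\<forall>u. f u = c + inner b u + inner u (Q u) / 2))"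

definition lin_approx :: "('a::real_inner \<Rightarrow> real) \<Rightarrow> ('a \<Rightarrow> 'a) \<Rightarrow> 'a \<Rightarrow> 'a \<Rightarrow> real" where
  "lin_approx g g' x u = g x + inner (g' x) (u - x)"

definition psi :: "('a \<Rightarrow> real) \<Rightarrow> ('a \<Rightarrow> ereal) \<Rightarrow> 'a \<Rightarrow> ereal" where
  "psi g h u = ereal (g u) + h u"

text \<open>tilde gamma_j, with xt = tilde x_j\<close>
definition gamma_tilde :: "real \<Rightarrow> ('a::real_inner \<Rightarrow> real) \<Rightarrow> ('a \<Rightarrow> 'a) \<Rightarrow> ('a \<Rightarrow> ereal) \<Rightarrow> 'a \<Rightarrow> 'a \<Rightarrow> ereal" where
  "gamma_tilde \<mu> g g' h xt u =
     ereal (lin_approx g g' xt u) + h u + ereal (\<mu> / 2 * (norm (u - xt))\<^sup>2)"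

text \<open>gamma_j, with xt = tilde x_j and yt = tilde y_{j+1}\<close>
definition gamma_lin :: "real \<Rightarrow> real \<Rightarrow> ('a::real_inner \<Rightarrow> real) \<Rightarrow> ('a \<Rightarrow> 'a) \<Rightarrow> ('a \<Rightarrow> ereal) \<Rightarrow> 'a \<Rightarrow> 'a \<Rightarrow> 'a \<Rightarrow> real" where
  "gamma_lin L \<mu> g g' h xt yt u =
     real_of_ereal (gamma_tilde \<mu> g g' h xt yt) + L * inner (xt - yt) (u - yt)
       + \<mu> / 2 * (norm (u - yt))\<^sup>2"

primrec Gamma :: "(nat \<Rightarrow> real) \<Rightarrow> (nat \<Rightarrow> real) \<Rightarrow> (nat \<Rightarrow> 'a \<Rightarrow> real) \<Rightarrow> nat \<Rightarrow> 'a \<Rightarrow> real" where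
  "Gamma A a gam 0 = (\<lambda>u. 0)"
| "Gamma A a gam (Suc j) = (\<lambda>u. (A j * Gamma A a gam j u + a j * gam j u) / A (Suc j))"

end

theory Submission
  imports Defs
begin


lemma norm_conv:
  fixes w z x :: "'a::real_inner"
  shows "(norm (t *\<^sub>R w + (1 - t) *\<^sub>R z - x))\<^sup>2
     = t * (norm (w - x))\<^sup>2 + (1 - t) * (norm (z - x))\<^sup>2 - t * (1 - t) * (norm (w - z))\<^sup>2"
proof -
  have e: "t *\<^sub>R w + (1 - t) *\<^sub>R z - x = t *\<^sub>R (w - x) + (1 - t) *\<^sub>R (z - x)"
    by (simp add: algebra_simps)
  have e2: "w - z = (w - x) - (z - x)" by simp
  show ?thesis unfolding e
    apply (subst e2)
    apply (simp only: power2_norm_eq_inner inner_add_left inner_add_right inner_diff_left inner_diff_right inner_scaleR_left inner_scaleR_right inner_commute[of "z - x" "w - x"])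
    by (simp add: algebra_simps power2_eq_square)
qed

lemma norm_split:
  fixes u x y :: "'a::real_inner"
  shows "(norm (u - x))\<^sup>2 = (norm (u - y))\<^sup>2 + 2 * inner (u - y) (y - x) + (norm (y - x))\<^sup>2"
proof -
  have e: "u - x = (u - y) + (y - x)" by simp
  show ?thesis apply (subst e)
    by (simp only: power2_norm_eq_inner inner_add_left inner_add_right inner_commute[of "y - x" "u - y"])
qed

lemma sc_quad:
  fixes b d :: "'a::real_inner"
  shows "strongly_convex \<mu> (\<lambda>u. c + inner b u + \<mu> / 2 * (norm (u - d))\<^sup>2)"
  unfolding strongly_convex_def
proof (intro allI impI)
  fix x y :: 'a and t :: real
  have "inner b (t *\<^sub>R x + (1 - t) *\<^sub>R y) = t * inner b x + (1 - t) * inner b y"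
    by (simp add: inner_add_right)
  then show "c + inner b (t *\<^sub>R x + (1 - t) *\<^sub>R y) + \<mu> / 2 * (norm (t *\<^sub>R x + (1 - t) *\<^sub>R y - d))\<^sup>2
    \<le> t * (c + inner b x + \<mu> / 2 * (norm (x - d))\<^sup>2) + (1 - t) * (c + inner b y + \<mu> / 2 * (norm (y - d))\<^sup>2) -
       t * (1 - t) * (\<mu> / 2) * (norm (x - y))\<^sup>2"
    by (simp only: norm_conv) (simp add: field_simps)
qed

lemma sc_grad:
  fixes g :: "'a::real_inner \<Rightarrow> real"
  assumes sc: "strongly_convex \<mu> g" and d: "GDERIV g x :> G"
  shows "g x + inner G (u - x) + \<mu> / 2 * (norm (u - x))\<^sup>2 \<le> g u"
proof -
  define v where "v = u - x"
  have hd: "((\<lambda>t. g (x + t *\<^sub>R v)) has_derivative (\<lambda>t. inner G (t *\<^sub>R v))) (at 0)"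
  proof -
    have "((\<lambda>t::real. x + t *\<^sub>R v) has_derivative (\<lambda>t. t *\<^sub>R v)) (at 0)"
      by (auto intro!: derivative_eq_intros)
    moreover have "(g has_derivative (\<lambda>h. inner G h)) (at (x + 0 *\<^sub>R v))"
      using d by (simp add: gderiv_def inner_commute)
    ultimately have "((\<lambda>t. g (x + t *\<^sub>R v)) has_derivative (\<lambda>t. inner G (t *\<^sub>R v))) (at 0)"
      using has_derivative_compose[of "\<lambda>t::real. x + t *\<^sub>R v" "\<lambda>t. t *\<^sub>R v" 0 UNIV g "inner G"] by simp
    then show ?thesis .
  qed
  have "((\<lambda>t. g (x + t *\<^sub>R v)) has_real_derivative inner G v) (at 0)"
    using hd by (simp add: has_field_derivative_def mult.commute[of _ "G \<bullet> v"])
  then have lim: "((\<lambda>t. (g (x + t *\<^sub>R v) - g (x + 0 *\<^sub>R v)) / (t - 0)) \<longlongrightarrow> inner G v) (at 0)"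
    using DERIV_def[of "\<lambda>t. g (x + t *\<^sub>R v)" 0 "inner G v"] 
    by (simp add: DERIV_def)
  have lim1: "((\<lambda>t. (g (x + t *\<^sub>R v) - g x) / t) \<longlongrightarrow> inner G v) (at_right 0)"
    using tendsto_mono[OF at_le[of "{0<..}"] lim] by simp
  have lim2: "((\<lambda>t. g u - g x - (1 - t) * (\<mu> / 2) * (norm v)\<^sup>2) \<longlongrightarrow> g u - g x - (1 - 0) * (\<mu> / 2) * (norm v)\<^sup>2) (at_right 0)"
    by (intro tendsto_intros)
  have ev: "eventually (\<lambda>t. (g (x + t *\<^sub>R v) - g x) / t \<le> g u - g x - (1 - t) * (\<mu> / 2) * (norm v)\<^sup>2) (at_right (0::real))"
  proof -
    have "eventually (\<lambda>t::real. 0 < t \<and> t < 1) (at_right 0)"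
      using eventually_at_right_real[of 0 1] by simp
    then show ?thesis
    proof (rule eventually_mono)
      fix t :: real assume t: "0 < t \<and> t < 1"
      have e: "x + t *\<^sub>R v = t *\<^sub>R u + (1 - t) *\<^sub>R x" by (simp add: v_def algebra_simps)
      have "g (t *\<^sub>R u + (1 - t) *\<^sub>R x) \<le> t * g u + (1 - t) * g x - t * (1 - t) * (\<mu> / 2) * (norm (u - x))\<^sup>2"
        using sc t unfolding strongly_convex_def by auto
      then have "g (x + t *\<^sub>R v) - g x \<le> t * (g u - g x - (1 - t) * (\<mu> / 2) * (norm v)\<^sup>2)"
        unfolding e v_def by (simp add: algebra_simps)
      then show "(g (x + t *\<^sub>R v) - g x) / t \<le> g u - g x - (1 - t) * (\<mu> / 2) * (norm v)\<^sup>2"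
        using t by (simp add: divide_le_eq mult.commute)
    qed
  qed
  have "inner G v \<le> g u - g x - (1 - 0) * (\<mu> / 2) * (norm v)\<^sup>2"
    using tendsto_le[OF _ lim2 lim1 ev] by simp
  then show ?thesis by (simp add: v_def)
qed

lemma le_eps_lim:
  fixes a b :: real
  assumes "\<And>t. 0 < t \<Longrightarrow> t < 1 \<Longrightarrow> (1 - t) * b \<le> a" and "b \<ge> 0"
  shows "b \<le> a"
proof (rule ccontr)
  assume "\<not> b \<le> a"
  then have ba: "a < b" by simp
  define t where "t = (b - a) / (2 * b)"
  have b0: "b > 0" using ba assms(2) assms(1)[of "1/2"] by simp
  have "0 < t" "t < 1" using ba b0 assms(1)[of "1/2"] by (auto simp: t_def field_simps)
  then have "(1 - t) * b \<le> a" using assms(1) by blast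
  moreover have "(1 - t) * b = (a + b) / 2" using b0 by (simp add: t_def field_simps)
  ultimately show False using ba by simp
qed



lemma step_id:
  fixes u xk xk1 X Y :: "'a::real_inner"
  assumes V: "P *\<^sub>R xk1 = B *\<^sub>R xk - (a * L) *\<^sub>R (X - Y) + (a * \<mu>) *\<^sub>R Y"
    and P: "P = B + a * \<mu>"
  shows "B / 2 * (norm (u - xk))\<^sup>2 + a * (L * inner (X - Y) (u - Y) + \<mu> / 2 * (norm (u - Y))\<^sup>2)
    = (B / 2 * (norm xk)\<^sup>2 + a * (L * inner (X - Y) (- Y) + \<mu> / 2 * (norm Y)\<^sup>2) - P / 2 * (norm xk1)\<^sup>2)
      + P / 2 * (norm (u - xk1))\<^sup>2"
proof -
  have "inner u (P *\<^sub>R xk1) = inner u (B *\<^sub>R xk - (a * L) *\<^sub>R (X - Y) + (a * \<mu>) *\<^sub>R Y)"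
    using V by simp
  then have i: "P * inner u xk1 = B * inner u xk - a * L * (inner u X - inner u Y) + a * \<mu> * inner u Y"
    by (simp add: inner_add_right inner_diff_right)
  have n1: "(norm (u - xk1))\<^sup>2 = (norm u)\<^sup>2 - 2 * inner u xk1 + (norm xk1)\<^sup>2"
    by (simp add: power2_norm_eq_inner inner_diff_left inner_diff_right inner_commute)
  have n2: "(norm (u - xk))\<^sup>2 = (norm u)\<^sup>2 - 2 * inner u xk + (norm xk)\<^sup>2"
    by (simp add: power2_norm_eq_inner inner_diff_left inner_diff_right inner_commute)
  have n3: "(norm (u - Y))\<^sup>2 = (norm u)\<^sup>2 - 2 * inner u Y + (norm Y)\<^sup>2"
    by (simp add: power2_norm_eq_inner inner_diff_left inner_diff_right inner_commute)
  have n4: "inner (X - Y) (u - Y) = inner u X - inner u Y + inner (X - Y) (- Y)"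
    by (simp add: inner_diff_left inner_diff_right inner_commute)
  have "P / 2 * (norm (u - xk1))\<^sup>2 = P / 2 * (norm u)\<^sup>2 - P * inner u xk1 + P / 2 * (norm xk1)\<^sup>2"
    unfolding n1 by (simp add: algebra_simps)
  also have "\<dots> = P / 2 * (norm u)\<^sup>2 - (B * inner u xk - a * L * (inner u X - inner u Y) + a * \<mu> * inner u Y) + P / 2 * (norm xk1)\<^sup>2"
    unfolding i ..
  finally have e: "P / 2 * (norm (u - xk1))\<^sup>2 = P / 2 * (norm u)\<^sup>2 - (B * inner u xk - a * L * (inner u X - inner u Y) + a * \<mu> * inner u Y) + P / 2 * (norm xk1)\<^sup>2" .
  show ?thesis by (simp only: e n2 n3 n4) (simp add: P algebra_simps)
qed

lemma arith1:
  fixes K lY H c Na Nb Nc lu r t \<Phi> :: real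
  assumes "K = lY + H + c * Nb" "\<Phi> = lu + r + c * Nc"
    "K \<le> t * lu + (1 - t) * lY + (t * r + (1 - t) * H) + c * (t * Nc + (1 - t) * Nb - t * (1 - t) * Na)"
  shows "t * ((1 - t) * (c * Na)) \<le> t * (\<Phi> - K)"
proof -
  have "t * (\<Phi> - K) - t * ((1 - t) * (c * Na)) = (t * lu + (1 - t) * lY + (t * r + (1 - t) * H) + c * (t * Nc + (1 - t) * Nb - t * (1 - t) * Na)) - K"
    unfolding assms(1,2) by (simp add: algebra_simps)
  then show ?thesis using assms(3) by linarith
qed

lemma seq_facts:
  fixes A a \<tau> :: "nat \<Rightarrow> real"
  assumes mu_pos: "\<mu> > 0" and L_pos: "L > 0"
    and A0: "A 0 = 0" and tau0: "\<tau> 0 = 1 / L"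
    and a_def: "\<And>i. a i = (\<tau> i + sqrt ((\<tau> i)\<^sup>2 + 4 * \<tau> i * A i)) / 2"
    and tau_rec: "\<And>i. \<tau> (Suc i) = \<tau> i + \<mu> * a i / L"
    and A_rec: "\<And>i. A (Suc i) = A i + a i"
  shows "\<tau> i > 0 \<and> A i \<ge> 0 \<and> \<tau> i * L = A i * \<mu> + 1"
proof (induction i)
  case 0
  then show ?case using L_pos by (simp add: A0 tau0)
next
  case (Suc i)
  have a0: "a i \<ge> 0" using Suc by (simp add: a_def)
  have "\<mu> * a i / L \<ge> 0" using a0 mu_pos L_pos by simp
  then have "\<tau> (Suc i) > 0" using Suc by (simp add: tau_rec)
  moreover have "A (Suc i) \<ge> 0" using Suc a0 by (simp add: A_rec)
  moreover have "\<tau> (Suc i) * L = A (Suc i) * \<mu> + 1" using Suc L_pos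
    by (simp add: tau_rec A_rec algebra_simps)
  ultimately show ?case by blast
qed

lemma a_facts:
  fixes A a \<tau> :: "nat \<Rightarrow> real"
  assumes tp: "\<tau> i > 0" and Ap: "A i \<ge> 0"
    and a_def: "a i = (\<tau> i + sqrt ((\<tau> i)\<^sup>2 + 4 * \<tau> i * A i)) / 2"
    and A_rec: "A (Suc i) = A i + a i"
  shows "a i > 0 \<and> A (Suc i) > 0 \<and> (a i)\<^sup>2 = \<tau> i * A (Suc i)"
proof -
  define r where "r = sqrt ((\<tau> i)\<^sup>2 + 4 * \<tau> i * A i)"
  have "4 * \<tau> i * A i \<ge> 0" using tp Ap by simp
  moreover have "(\<tau> i)\<^sup>2 \<ge> 0" by simp
  ultimately have nn: "(\<tau> i)\<^sup>2 + 4 * \<tau> i * A i \<ge> 0" by linarith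
  have r0: "r \<ge> 0" using nn by (simp add: r_def)
  from nn have r2: "r\<^sup>2 = (\<tau> i)\<^sup>2 + 4 * \<tau> i * A i" unfolding r_def
    using tp Ap by (simp add: real_sqrt_pow2 add_nonneg_nonneg mult_nonneg_nonneg)
  have a: "a i = (\<tau> i + r) / 2" by (simp add: a_def r_def)
  have "a i > 0" using a r0 tp by simp
  moreover have "A (Suc i) > 0" using calculation Ap A_rec by simp
  moreover have "(a i)\<^sup>2 = \<tau> i * A (Suc i)"
    unfolding A_rec a using r2 by (simp add: power2_eq_square field_simps)
  ultimately show ?thesis by blast
qed

lemma Gamma_rep:
  fixes x y xt yt :: "nat \<Rightarrow> 'a::real_inner" and A a \<tau> :: "nat \<Rightarrow> real"
  assumes mu_pos: "\<mu> > 0" and L_pos: "L > 0"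
    and A0: "A 0 = 0" and tau0: "\<tau> 0 = 1 / L"
    and a_def: "\<And>i. a i = (\<tau> i + sqrt ((\<tau> i)\<^sup>2 + 4 * \<tau> i * A i)) / 2"
    and tau_rec: "\<And>i. \<tau> (Suc i) = \<tau> i + \<mu> * a i / L"
    and A_rec: "\<And>i. A (Suc i) = A i + a i"
    and xt_def: "\<And>i. xt i = (A i / A (Suc i)) *\<^sub>R y i + (a i / A (Suc i)) *\<^sub>R x i"
    and x_rec: "\<And>i. x (Suc i) =
        (1 / (A (Suc i) * \<mu> + 1)) *\<^sub>R
          (((L + \<mu>) * a i) *\<^sub>R yt (Suc i) - (A i * a i * L / A (Suc i)) *\<^sub>R y i)"
    and gam: "\<And>i u. gam i u = D i + L * inner (xt i - yt (Suc i)) (u - yt (Suc i)) + \<mu> / 2 * (norm (u - yt (Suc i)))\<^sup>2"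
  shows "\<exists>C. \<forall>u. A k * Gamma A a gam k u + (norm (u - x 0))\<^sup>2 / 2 = C + (A k * \<mu> + 1) / 2 * (norm (u - x k))\<^sup>2"
proof (induction k)
  case 0
  show ?case by (rule exI[of _ 0]) (simp add: A0)
next
  case (Suc k)
  from Suc obtain C where C: "\<And>u. A k * Gamma A a gam k u + (norm (u - x 0))\<^sup>2 / 2 = C + (A k * \<mu> + 1) / 2 * (norm (u - x k))\<^sup>2"
    by blast
  have sf: "\<tau> k > 0 \<and> A k \<ge> 0 \<and> \<tau> k * L = A k * \<mu> + 1"
    using seq_facts[OF mu_pos L_pos A0 tau0 a_def tau_rec A_rec] by blast
  have af: "a k > 0 \<and> A (Suc k) > 0 \<and> (a k)\<^sup>2 = \<tau> k * A (Suc k)"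
    using a_facts[of \<tau> k A a] sf a_def A_rec by blast
  define P where "P = A (Suc k) * \<mu> + 1"
  define B where "B = A k * \<mu> + 1"
  have "A (Suc k) * \<mu> > 0" using af mu_pos by simp
  then have Pp: "P > 0" by (simp add: P_def)
  have PB: "P = B + a k * \<mu>" by (simp add: P_def B_def A_rec algebra_simps)
  have cB: "a k * L * (a k / A (Suc k)) = B"
  proof -
    have "a k * L * (a k / A (Suc k)) = (a k)\<^sup>2 / A (Suc k) * L" by (simp add: power2_eq_square)
    also have "\<dots> = \<tau> k * L" using af by simp
    finally show ?thesis using sf by (simp add: B_def)
  qed
  have V: "P *\<^sub>R x (Suc k) = B *\<^sub>R x k - (a k * L) *\<^sub>R (xt k - yt (Suc k)) + (a k * \<mu>) *\<^sub>R yt (Suc k)"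
  proof -
    have "P *\<^sub>R x (Suc k) = ((L + \<mu>) * a k) *\<^sub>R yt (Suc k) - (A k * a k * L / A (Suc k)) *\<^sub>R y k"
      using Pp by (simp add: x_rec P_def)
    also have "\<dots> = (B *\<^sub>R x k - (a k * L) *\<^sub>R (xt k - yt (Suc k)) + (a k * \<mu>) *\<^sub>R yt (Suc k)) - (B - a k * L * (a k / A (Suc k))) *\<^sub>R x k"
      by (simp add: xt_def algebra_simps)
    finally show ?thesis using cB by simp
  qed
  define Cn where "Cn = C + a k * D k + (B / 2 * (norm (x k))\<^sup>2 + a k * (L * inner (xt k - yt (Suc k)) (- yt (Suc k)) + \<mu> / 2 * (norm (yt (Suc k)))\<^sup>2) - P / 2 * (norm (x (Suc k)))\<^sup>2)"
  show ?case
  proof (intro exI allI)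
    fix u
    have G: "A (Suc k) * Gamma A a gam (Suc k) u = A k * Gamma A a gam k u + a k * gam k u"
      using af by simp
    have "A (Suc k) * Gamma A a gam (Suc k) u + (norm (u - x 0))\<^sup>2 / 2
       = C + a k * D k + (B / 2 * (norm (u - x k))\<^sup>2 + a k * (L * inner (xt k - yt (Suc k)) (u - yt (Suc k)) + \<mu> / 2 * (norm (u - yt (Suc k)))\<^sup>2))"
      unfolding G using C[of u] by (simp add: gam B_def algebra_simps)
    also have "\<dots> = Cn + P / 2 * (norm (u - x (Suc k)))\<^sup>2"
      unfolding step_id[OF V PB] Cn_def by simp
    finally show "A (Suc k) * Gamma A a gam (Suc k) u + (norm (u - x 0))\<^sup>2 / 2 = Cn + (A (Suc k) * \<mu> + 1) / 2 * (norm (u - x (Suc k)))\<^sup>2"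
      by (simp add: P_def)
  qed
qed



theorem lemma2p2:
  fixes \<mu> L :: real
    and g :: "'a::euclidean_space \<Rightarrow> real" and g' :: "'a \<Rightarrow> 'a"
    and h :: "'a \<Rightarrow> ereal"
    and x y xt yt :: "nat \<Rightarrow> 'a"
    and A a \<tau> :: "nat \<Rightarrow> real"
    and j :: nat
  assumes mu_pos: "\<mu> > 0" and L_pos: "L > 0"
    and g_sc: "strongly_convex \<mu> g"
    and g_smooth: "smooth_with_gradient (L + \<mu>) g g'"
    and h_pcc: "proper_closed_convex h"
    and A0: "A 0 = 0" and tau0: "\<tau> 0 = 1 / L" and y0: "y 0 = x 0"
    and a_def: "\<And>i. a i = (\<tau> i + sqrt ((\<tau> i)\<^sup>2 + 4 * \<tau> i * A i)) / 2"
    and tau_rec: "\<And>i. \<tau> (Suc i) = \<tau> i + \<mu> * a i / L"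
    and A_rec: "\<And>i. A (Suc i) = A i + a i"
    and xt_def: "\<And>i. xt i = (A i / A (Suc i)) *\<^sub>R y i + (a i / A (Suc i)) *\<^sub>R x i"
    and yt_def: "\<And>i. is_arg_min
        (\<lambda>u. ereal (lin_approx g g' (xt i) u) + h u + ereal ((L + \<mu>) / 2 * (norm (u - xt i))\<^sup>2))
        (\<lambda>_. True) (yt (Suc i))"
    and y_rec: "\<And>i. y (Suc i) \<in> {y i, yt (Suc i)} \<and>
        psi g h (y (Suc i)) \<le> psi g h (y i) \<and> psi g h (y (Suc i)) \<le> psi g h (yt (Suc i))"
    and x_rec: "\<And>i. x (Suc i) =
        (1 / (A (Suc i) * \<mu> + 1)) *\<^sub>R
          (((L + \<mu>) * a i) *\<^sub>R yt (Suc i) - (A i * a i * L / A (Suc i)) *\<^sub>R y i)"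
  shows
    "(\<forall>u. ereal (gamma_lin L \<mu> g g' h (xt j) (yt (Suc j)) u) \<le> gamma_tilde \<mu> g g' h (xt j) u
          \<and> gamma_tilde \<mu> g g' h (xt j) u \<le> psi g h u)
     \<and> gamma_tilde \<mu> g g' h (xt j) (yt (Suc j))
          = ereal (gamma_lin L \<mu> g g' h (xt j) (yt (Suc j)) (yt (Suc j)))
     \<and> (INF u. gamma_tilde \<mu> g g' h (xt j) u + ereal (L / 2 * (norm (u - xt j))\<^sup>2))
          = ereal (INF u. gamma_lin L \<mu> g g' h (xt j) (yt (Suc j)) u + L / 2 * (norm (u - xt j))\<^sup>2)
     \<and> (\<forall>v. is_arg_min (\<lambda>u. gamma_tilde \<mu> g g' h (xt j) u + ereal (L / 2 * (norm (u - xt j))\<^sup>2))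
              (\<lambda>_. True) v \<longleftrightarrow> v = yt (Suc j))
     \<and> (\<forall>v. is_arg_min (\<lambda>u. gamma_lin L \<mu> g g' h (xt j) (yt (Suc j)) u + L / 2 * (norm (u - xt j))\<^sup>2)
              (\<lambda>_. True) v \<longleftrightarrow> v = yt (Suc j))
     \<and> quadratic_fun (gamma_lin L \<mu> g g' h (xt j) (yt (Suc j)))
     \<and> strongly_convex \<mu> (gamma_lin L \<mu> g g' h (xt j) (yt (Suc j)))
     \<and> quadratic_fun (Gamma A a (\<lambda>i. gamma_lin L \<mu> g g' h (xt i) (yt (Suc i))) (Suc j))
     \<and> strongly_convex \<mu> (Gamma A a (\<lambda>i. gamma_lin L \<mu> g g' h (xt i) (yt (Suc i))) (Suc j))
     \<and> (\<forall>v. is_arg_min (\<lambda>u. A j * Gamma A a (\<lambda>i. gamma_lin L \<mu> g g' h (xt i) (yt (Suc i))) j u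
                          + (norm (u - x 0))\<^sup>2 / 2) (\<lambda>_. True) v \<longleftrightarrow> v = x j)"
proof -
  let ?X = "xt j" and ?Y = "yt (Suc j)"
  let ?lin = "lin_approx g g' (xt j)"
  let ?phi = "\<lambda>u. ereal (lin_approx g g' (xt j) u) + h u + ereal ((L + \<mu>) / 2 * (norm (u - xt j))\<^sup>2)"
  let ?gl = "gamma_lin L \<mu> g g' h (xt j) (yt (Suc j))"
  let ?gt = "gamma_tilde \<mu> g g' h (xt j)"
  have ymin: "\<And>u. ?phi ?Y \<le> ?phi u"
    using yt_def[of j] unfolding is_arg_min_def by (auto simp: not_less)
  have hnm: "\<And>u. h u \<noteq> -\<infinity>" using h_pcc unfolding proper_closed_convex_def by blast
  obtain x1 where x1: "h x1 \<noteq> \<infinity>" using h_pcc unfolding proper_closed_convex_def by blast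
  have hconv: "\<And>x y t. 0 < t \<Longrightarrow> t < 1 \<Longrightarrow> h (t *\<^sub>R x + (1 - t) *\<^sub>R y) \<le> ereal t * h x + ereal (1 - t) * h y"
    using h_pcc unfolding proper_closed_convex_def by blast
  have "?phi x1 \<noteq> \<infinity>" using x1 hnm[of x1] by (cases "h x1") auto
  then have "?phi ?Y \<noteq> \<infinity>" using ymin[of x1] by (metis ereal_infty_less_eq(1))
  then have "h ?Y \<noteq> \<infinity>" by auto
  then obtain H where hY: "h ?Y = ereal H" using hnm[of ?Y] by (cases "h ?Y") auto
  define K where "K = ?lin ?Y + H + (L + \<mu>) / 2 * (norm (?Y - ?X))\<^sup>2"
  define K' where "K' = ?lin ?Y + H + \<mu> / 2 * (norm (?Y - ?X))\<^sup>2"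
  have phiY: "?phi ?Y = ereal K" by (simp add: hY K_def)
  have gtY: "?gt ?Y = ereal K'" by (simp add: gamma_tilde_def hY K'_def)
  have glu: "\<And>u. ?gl u = K' + L * inner (?X - ?Y) (u - ?Y) + \<mu> / 2 * (norm (u - ?Y))\<^sup>2"
    by (simp add: gamma_lin_def gtY)
  have KK: "K = K' + L / 2 * (norm (?Y - ?X))\<^sup>2" by (simp add: K_def K'_def algebra_simps)
  have linc: "\<And>u v t. ?lin (t *\<^sub>R u + (1 - t) *\<^sub>R v) = t * ?lin u + (1 - t) * ?lin v"
    by (simp add: lin_approx_def inner_add_right inner_diff_right algebra_simps)
  have F2: "K + (L + \<mu>) / 2 * (norm (u - ?Y))\<^sup>2 \<le> ?lin u + r + (L + \<mu>) / 2 * (norm (u - ?X))\<^sup>2"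
    if hu: "h u = ereal r" for u r
  proof -
    let ?c = "(L + \<mu>) / 2"
    define \<Phi> where "\<Phi> = ?lin u + r + ?c * (norm (u - ?X))\<^sup>2"
    have "(1 - t) * (?c * (norm (u - ?Y))\<^sup>2) \<le> \<Phi> - K" if t: "0 < t" "t < 1" for t
    proof -
      define p where "p = t *\<^sub>R u + (1 - t) *\<^sub>R ?Y"
      have "h p \<le> ereal t * h u + ereal (1 - t) * h ?Y" unfolding p_def using hconv t by blast
      also have "\<dots> = ereal (t * r + (1 - t) * H)" by (simp add: hu hY)
      finally have hp: "h p \<le> ereal (t * r + (1 - t) * H)" .
      then obtain q where q: "h p = ereal q" using hnm[of p] by (cases "h p") auto
      have qle: "q \<le> t * r + (1 - t) * H" using hp q by simp
      have "ereal K \<le> ?phi p" using ymin[of p] phiY by simp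
      then have "K \<le> ?lin p + q + ?c * (norm (p - ?X))\<^sup>2" by (simp add: q)
      also have "\<dots> = t * ?lin u + (1 - t) * ?lin ?Y + q
          + ?c * (t * (norm (u - ?X))\<^sup>2 + (1 - t) * (norm (?Y - ?X))\<^sup>2 - t * (1 - t) * (norm (u - ?Y))\<^sup>2)"
        unfolding p_def linc norm_conv ..
      finally have "K \<le> t * ?lin u + (1 - t) * ?lin ?Y + (t * r + (1 - t) * H)
          + ?c * (t * (norm (u - ?X))\<^sup>2 + (1 - t) * (norm (?Y - ?X))\<^sup>2 - t * (1 - t) * (norm (u - ?Y))\<^sup>2)"
        using qle by linarith
      then have "t * ((1 - t) * (?c * (norm (u - ?Y))\<^sup>2)) \<le> t * (\<Phi> - K)"
        using arith1[where K=K and lY="?lin ?Y" and H=H and c="?c" and Nb="(norm (?Y - ?X))\<^sup>2" and \<Phi>=\<Phi> and lu="?lin u" and r=r and Nc="(norm (u - ?X))\<^sup>2" and t=t and Na="(norm (u - ?Y))\<^sup>2", OF K_def \<Phi>_def] by blast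
      then show ?thesis using t by simp
    qed
    moreover have "?c * (norm (u - ?Y))\<^sup>2 \<ge> 0" using mu_pos L_pos by simp
    ultimately have "?c * (norm (u - ?Y))\<^sup>2 \<le> \<Phi> - K"
      by (rule le_eps_lim)
    then show ?thesis by (simp add: \<Phi>_def)
  qed
  have glsum: "\<And>u. ?gl u + L / 2 * (norm (u - ?X))\<^sup>2 = K + (L + \<mu>) / 2 * (norm (u - ?Y))\<^sup>2"
  proof -
    fix u
    show "?gl u + L / 2 * (norm (u - ?X))\<^sup>2 = K + (L + \<mu>) / 2 * (norm (u - ?Y))\<^sup>2"
      unfolding glu KK norm_split[of u ?X ?Y] by (simp add: algebra_simps inner_commute)
  qed
  have gtsum: "\<And>u. ?gt u + ereal (L / 2 * (norm (u - ?X))\<^sup>2) = ?phi u"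
  proof -
    fix u
    show "?gt u + ereal (L / 2 * (norm (u - ?X))\<^sup>2) = ?phi u"
      using hnm[of u] by (cases "h u") (auto simp: gamma_tilde_def algebra_simps)
  qed
  have P1: "\<forall>u. ereal (?gl u) \<le> ?gt u \<and> ?gt u \<le> psi g h u"
  proof
    fix u
    show "ereal (?gl u) \<le> ?gt u \<and> ?gt u \<le> psi g h u"
    proof (cases "h u")
      case (real r)
      have a1: "?gl u \<le> ?lin u + r + \<mu> / 2 * (norm (u - ?X))\<^sup>2"
        using F2[OF real] glsum[of u] by (simp add: field_simps)
      have a2: "?lin u + \<mu> / 2 * (norm (u - ?X))\<^sup>2 \<le> g u"
        using sc_grad[OF g_sc, of ?X "g' ?X" u] g_smooth
        unfolding smooth_with_gradient_def lin_approx_def by auto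
      show ?thesis using a1 a2 by (simp add: real gamma_tilde_def psi_def)
    next
      case PInf
      then show ?thesis by (simp add: gamma_tilde_def psi_def)
    next
      case MInf
      then show ?thesis using hnm by simp
    qed
  qed
  have P2: "?gt ?Y = ereal (?gl ?Y)" using gtY glu by simp
  have P3: "(INF u. ?gt u + ereal (L / 2 * (norm (u - ?X))\<^sup>2)) = ereal (INF u. ?gl u + L / 2 * (norm (u - ?X))\<^sup>2)"
  proof -
    have "(INF u. ?gt u + ereal (L / 2 * (norm (u - ?X))\<^sup>2)) = (INF u. ?phi u)" using gtsum by simp
    also have "\<dots> = ?phi ?Y"
    proof (rule antisym)
      show "(INF u. ?phi u) \<le> ?phi ?Y" by (rule INF_lower) simp
      show "?phi ?Y \<le> (INF u. ?phi u)" by (rule INF_greatest) (rule ymin)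
    qed
    also have "\<dots> = ereal K" by (rule phiY)
    also have "K = (INF u. ?gl u + L / 2 * (norm (u - ?X))\<^sup>2)"
    proof -
      have "(INF u. ?gl u + L / 2 * (norm (u - ?X))\<^sup>2) = (INF u. K + (L + \<mu>) / 2 * (norm (u - ?Y))\<^sup>2)"
        using glsum by simp
      also have "\<dots> = K"
      proof (rule antisym)
        show "(INF u. K + (L + \<mu>) / 2 * (norm (u - ?Y))\<^sup>2) \<le> K"
        proof (rule cINF_lower2[where x="?Y"])
          have "\<And>u. K \<le> K + (L + \<mu>) / 2 * (norm (u - ?Y))\<^sup>2" using mu_pos L_pos by simp
          then show "bdd_below (range (\<lambda>u. K + (L + \<mu>) / 2 * (norm (u - ?Y))\<^sup>2))"
            by (rule bdd_belowI2)
        qed simp_all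
        show "K \<le> (INF u. K + (L + \<mu>) / 2 * (norm (u - ?Y))\<^sup>2)"
          by (rule cINF_greatest) (use mu_pos L_pos in simp_all)
      qed
      finally show ?thesis by simp
    qed
    finally show ?thesis by simp
  qed
  have P4: "\<forall>v. is_arg_min (\<lambda>u. ?gt u + ereal (L / 2 * (norm (u - ?X))\<^sup>2)) (\<lambda>_. True) v \<longleftrightarrow> v = ?Y"
  proof (intro allI iffI)
    fix v
    assume "is_arg_min (\<lambda>u. ?gt u + ereal (L / 2 * (norm (u - ?X))\<^sup>2)) (\<lambda>_. True) v"
    then have "?phi v \<le> ?phi ?Y" unfolding is_arg_min_def gtsum by (auto simp: not_less)
    then have pv: "?phi v \<le> ereal K" using phiY by simp
    then have "h v \<noteq> \<infinity>" by auto
    then obtain r where r: "h v = ereal r" using hnm[of v] by (cases "h v") auto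
    have "?lin v + r + (L + \<mu>) / 2 * (norm (v - ?X))\<^sup>2 \<le> K" using pv r by simp
    then have "(L + \<mu>) / 2 * (norm (v - ?Y))\<^sup>2 \<le> 0" using F2[OF r] by simp
    moreover have "(L + \<mu>) / 2 > 0" using mu_pos L_pos by simp
    ultimately have "(norm (v - ?Y))\<^sup>2 \<le> 0" by (simp add: mult_le_0_iff)
    then show "v = ?Y" by simp
  next
    fix v assume "v = ?Y"
    then show "is_arg_min (\<lambda>u. ?gt u + ereal (L / 2 * (norm (u - ?X))\<^sup>2)) (\<lambda>_. True) v"
      unfolding is_arg_min_def gtsum using ymin by (auto simp: not_less)
  qed
  have P5: "\<forall>v. is_arg_min (\<lambda>u. ?gl u + L / 2 * (norm (u - ?X))\<^sup>2) (\<lambda>_. True) v \<longleftrightarrow> v = ?Y"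
  proof (intro allI iffI)
    fix v
    assume "is_arg_min (\<lambda>u. ?gl u + L / 2 * (norm (u - ?X))\<^sup>2) (\<lambda>_. True) v"
    then have "K + (L + \<mu>) / 2 * (norm (v - ?Y))\<^sup>2 \<le> K + (L + \<mu>) / 2 * (norm (?Y - ?Y))\<^sup>2"
      unfolding is_arg_min_def glsum by (meson not_le)
    then have "(L + \<mu>) / 2 * (norm (v - ?Y))\<^sup>2 \<le> 0" by simp
    moreover have "(L + \<mu>) / 2 > 0" using mu_pos L_pos by simp
    ultimately have "(norm (v - ?Y))\<^sup>2 \<le> 0" by (simp add: mult_le_0_iff)
    then show "v = ?Y" by simp
  next
    fix v assume "v = ?Y"
    then show "is_arg_min (\<lambda>u. ?gl u + L / 2 * (norm (u - ?X))\<^sup>2) (\<lambda>_. True) v"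
      unfolding is_arg_min_def glsum using mu_pos L_pos by (auto simp: not_less)
  qed
  have quad_id: "quadratic_fun (\<lambda>u. c + inner b u + \<mu> / 2 * (norm (u - d))\<^sup>2)" for c :: real and b d :: 'a
    unfolding quadratic_fun_def
  proof (intro exI conjI allI)
    show "linear (\<lambda>u::'a. \<mu> *\<^sub>R u)" by (rule linear_scale_self)
    fix x y :: 'a
    show "inner (\<mu> *\<^sub>R x) y = inner x (\<mu> *\<^sub>R y)" by simp
  next
    fix u :: 'a
    show "c + inner b u + \<mu> / 2 * (norm (u - d))\<^sup>2 = (c + \<mu> / 2 * (norm d)\<^sup>2) + inner (b - \<mu> *\<^sub>R d) u + inner u (\<mu> *\<^sub>R u) / 2"
      by (simp add: power2_norm_eq_inner inner_diff_left inner_diff_right inner_commute algebra_simps)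
  qed
  have glform: "?gl = (\<lambda>u. (K' - L * inner (?X - ?Y) ?Y) + inner (L *\<^sub>R (?X - ?Y)) u + \<mu> / 2 * (norm (u - ?Y))\<^sup>2)"
    by (rule ext) (simp add: glu inner_diff_right algebra_simps)
  have P6: "quadratic_fun ?gl" unfolding glform by (rule quad_id)
  have P7: "strongly_convex \<mu> ?gl" unfolding glform by (rule sc_quad)
  let ?gam = "\<lambda>i. gamma_lin L \<mu> g g' h (xt i) (yt (Suc i))"
  have gamform: "\<And>i u. ?gam i u = real_of_ereal (gamma_tilde \<mu> g g' h (xt i) (yt (Suc i))) + L * inner (xt i - yt (Suc i)) (u - yt (Suc i)) + \<mu> / 2 * (norm (u - yt (Suc i)))\<^sup>2"
    by (simp add: gamma_lin_def)
  have rep: "\<And>k. \<exists>C. \<forall>u. A k * Gamma A a ?gam k u + (norm (u - x 0))\<^sup>2 / 2 = C + (A k * \<mu> + 1) / 2 * (norm (u - x k))\<^sup>2"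
    by (rule Gamma_rep[OF mu_pos L_pos A0 tau0 a_def tau_rec A_rec xt_def x_rec gamform])
  have sfj: "\<tau> j > 0 \<and> A j \<ge> 0 \<and> \<tau> j * L = A j * \<mu> + 1"
    using seq_facts[OF mu_pos L_pos A0 tau0 a_def tau_rec A_rec] by blast
  have afj: "a j > 0 \<and> A (Suc j) > 0 \<and> (a j)\<^sup>2 = \<tau> j * A (Suc j)"
    using a_facts[of \<tau> j A a] sfj a_def A_rec by blast
  obtain C1 where C1: "\<And>u. A (Suc j) * Gamma A a ?gam (Suc j) u + (norm (u - x 0))\<^sup>2 / 2 = C1 + (A (Suc j) * \<mu> + 1) / 2 * (norm (u - x (Suc j)))\<^sup>2"
    using rep[of "Suc j"] by blast
  define As where "As = A (Suc j)"
  have Asp: "As > 0" using afj by (simp add: As_def)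
  define xs where "xs = x (Suc j)"
  have Gform: "Gamma A a ?gam (Suc j) = (\<lambda>u. (C1 + (As * \<mu> + 1) / 2 * (norm xs)\<^sup>2 - (norm (x 0))\<^sup>2 / 2) / As
       + inner ((x 0 - (As * \<mu> + 1) *\<^sub>R xs) /\<^sub>R As) u + \<mu> / 2 * (norm (u - 0))\<^sup>2)"
  proof (rule ext)
    fix u
    have e: "As * Gamma A a ?gam (Suc j) u = C1 + (As * \<mu> + 1) / 2 * (norm (u - xs))\<^sup>2 - (norm (u - x 0))\<^sup>2 / 2"
      using C1[of u] unfolding As_def xs_def by linarith
    define cc where "cc = C1 + (As * \<mu> + 1) / 2 * (norm xs)\<^sup>2 - (norm (x 0))\<^sup>2 / 2"
    define w where "w = x 0 - (As * \<mu> + 1) *\<^sub>R xs"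
    have s1: "As * (cc / As + inner (w /\<^sub>R As) u + \<mu> / 2 * (norm (u - 0))\<^sup>2) = cc + inner w u + As * \<mu> / 2 * (norm u)\<^sup>2"
      using Asp by (simp add: algebra_simps)
    have n1: "(norm (u - xs))\<^sup>2 = (norm u)\<^sup>2 - 2 * inner u xs + (norm xs)\<^sup>2"
      by (simp add: power2_norm_eq_inner inner_diff_left inner_diff_right inner_commute)
    have n2: "(norm (u - x 0))\<^sup>2 = (norm u)\<^sup>2 - 2 * inner u (x 0) + (norm (x 0))\<^sup>2"
      by (simp add: power2_norm_eq_inner inner_diff_left inner_diff_right inner_commute)
    have iw: "inner w u = inner u (x 0) - (As * \<mu> + 1) * inner u xs"
      by (simp add: w_def inner_diff_left inner_diff_right inner_commute)
    have s2: "C1 + (As * \<mu> + 1) / 2 * (norm (u - xs))\<^sup>2 - (norm (u - x 0))\<^sup>2 / 2 = cc + inner w u + As * \<mu> / 2 * (norm u)\<^sup>2"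
      unfolding n1 n2 iw cc_def by (simp add: field_simps)
    have "As * Gamma A a ?gam (Suc j) u = As * ((C1 + (As * \<mu> + 1) / 2 * (norm xs)\<^sup>2 - (norm (x 0))\<^sup>2 / 2) / As
       + inner ((x 0 - (As * \<mu> + 1) *\<^sub>R xs) /\<^sub>R As) u + \<mu> / 2 * (norm (u - 0))\<^sup>2)"
      unfolding e s2 cc_def[symmetric] w_def[symmetric] s1 ..
    moreover have "As \<noteq> 0" using Asp by simp
    ultimately show "Gamma A a ?gam (Suc j) u = (C1 + (As * \<mu> + 1) / 2 * (norm xs)\<^sup>2 - (norm (x 0))\<^sup>2 / 2) / As
       + inner ((x 0 - (As * \<mu> + 1) *\<^sub>R xs) /\<^sub>R As) u + \<mu> / 2 * (norm (u - 0))\<^sup>2"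
      using mult_left_cancel by blast
  qed
  have P8: "quadratic_fun (Gamma A a ?gam (Suc j))" unfolding Gform by (rule quad_id)
  have P9: "strongly_convex \<mu> (Gamma A a ?gam (Suc j))" unfolding Gform by (rule sc_quad)
  obtain C0 where C0: "\<And>u. A j * Gamma A a ?gam j u + (norm (u - x 0))\<^sup>2 / 2 = C0 + (A j * \<mu> + 1) / 2 * (norm (u - x j))\<^sup>2"
    using rep[of j] by blast
  have cpos: "(A j * \<mu> + 1) / 2 > 0" using sfj mu_pos by (simp add: add_nonneg_pos)
  have P10: "\<forall>v. is_arg_min (\<lambda>u. A j * Gamma A a ?gam j u + (norm (u - x 0))\<^sup>2 / 2) (\<lambda>_. True) v \<longleftrightarrow> v = x j"
  proof (intro allI iffI)
    fix v
    assume "is_arg_min (\<lambda>u. A j * Gamma A a ?gam j u + (norm (u - x 0))\<^sup>2 / 2) (\<lambda>_. True) v"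
    then have "C0 + (A j * \<mu> + 1) / 2 * (norm (v - x j))\<^sup>2 \<le> C0 + (A j * \<mu> + 1) / 2 * (norm (x j - x j))\<^sup>2"
      unfolding is_arg_min_def C0 by (meson not_le)
    then have "(A j * \<mu> + 1) / 2 * (norm (v - x j))\<^sup>2 \<le> 0" by simp
    with cpos have "(norm (v - x j))\<^sup>2 \<le> 0" by (simp add: mult_le_0_iff)
    then show "v = x j" by simp
  next
    fix v assume "v = x j"
    then show "is_arg_min (\<lambda>u. A j * Gamma A a ?gam j u + (norm (u - x 0))\<^sup>2 / 2) (\<lambda>_. True) v"
      unfolding is_arg_min_def C0 using cpos by (auto simp: not_less)
  qed
  show ?thesis using P1 P2 P3 P4 P5 P6 P7 P8 P9 P10 by blast
qed

end
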